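(* Let $G$ be a DAG or MAG on $\{Y,X_1,\dots,X_d\}$ ($d\ge1$) whose skeleton is the path $Y - X_d - X_{d-1} - \cdots - X_1$, with arbitrary edge orientations. Then $N_G=d+1$.
   Context: For $A\subseteq\{1,\dots,d\}$, $\mathbf{X}_A:=\{X_i:i\in A\}$. $\perp_G$ is d-separation (m-separation for a MAG). For $S',S''\subseteq\{1,\dots,d\}$, $S'\sim_G S''$ iff there exists $S_\cap\subseteq S'\cap S''$ with $Y\perp_G\mathbf{X}_{(S'\cup S'')\setminus S_\cap}\mid\mathbf{X}_{S_\cap}$ (separation from the empty set holds trivially); this is an equivalence relation, and $N_G$ denotes the number of its equivalence classes on the power set of $\{1,\dots,d\}$. *)

theory Defs
  imports Main
begin

text \<open>Mixed graphs (covering DAGs and MAGs) are given by edge marks: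
  g a b = None if a and b are non-adjacent, otherwise g a b is the mark
  at the endpoint b of the edge between a and b (Tail or Arrow).
  So a \<rightarrow> b is g a b = Some Arrow, g b a = Some Tail;
  a \<leftrightarrow> b is both marks Arrow; a - b is both marks Tail.\<close>

datatype emark = Tail | Arrow

type_synonym 'v mgraph = "'v \<Rightarrow> 'v \<Rightarrow> emark option"

definition adj :: "'v mgraph \<Rightarrow> 'v \<Rightarrow> 'v \<Rightarrow> bool" where
  "adj g a b = (g a b \<noteq> None)"

definition dir_edges :: "'v mgraph \<Rightarrow> ('v \<times> 'v) set" where
  "dir_edges g = {(u, v). g u v = Some Arrow \<and> g v u = Some Tail}"

definition anc :: "'v mgraph \<Rightarrow> 'v \<Rightarrow> 'v \<Rightarrow> bool" where
  "anc g a b = ((a, b) \<in> (dir_edges g)\<^sup>*)"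

definition well_formed :: "'v set \<Rightarrow> 'v mgraph \<Rightarrow> bool" where
  "well_formed V g = ((\<forall>a b. g a b \<noteq> None \<longrightarrow> a \<in> V \<and> b \<in> V \<and> a \<noteq> b)
      \<and> (\<forall>a b. g a b = None \<longleftrightarrow> g b a = None))"

definition is_path :: "'v mgraph \<Rightarrow> 'v list \<Rightarrow> bool" where
  "is_path g xs = (xs \<noteq> [] \<and> distinct xs \<and>
      (\<forall>i. Suc i < length xs \<longrightarrow> adj g (xs ! i) (xs ! Suc i)))"

definition collider :: "'v mgraph \<Rightarrow> 'v list \<Rightarrow> nat \<Rightarrow> bool" where
  "collider g xs i = (0 < i \<and> Suc i < length xs \<and>
      g (xs ! (i - 1)) (xs ! i) = Some Arrow \<and> g (xs ! Suc i) (xs ! i) = Some Arrow)"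

definition m_connecting :: "'v mgraph \<Rightarrow> 'v set \<Rightarrow> 'v list \<Rightarrow> bool" where
  "m_connecting g Z xs = (is_path g xs \<and>
     (\<forall>i. 0 < i \<and> Suc i < length xs \<longrightarrow>
        (collider g xs i \<longrightarrow> (\<exists>z\<in>Z. anc g (xs ! i) z)) \<and>
        (\<not> collider g xs i \<longrightarrow> xs ! i \<notin> Z)))"

definition m_sep :: "'v mgraph \<Rightarrow> 'v set \<Rightarrow> 'v set \<Rightarrow> 'v set \<Rightarrow> bool" where
  "m_sep g A B Z = (\<not> (\<exists>xs. m_connecting g Z xs \<and> hd xs \<in> A \<and> last xs \<in> B))"

definition is_DAG :: "'v set \<Rightarrow> 'v mgraph \<Rightarrow> bool" where
  "is_DAG V g = (well_formed V g \<and>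
     (\<forall>a b. adj g a b \<longrightarrow> (a, b) \<in> dir_edges g \<or> (b, a) \<in> dir_edges g) \<and>
     acyclic (dir_edges g))"

definition ancestral :: "'v mgraph \<Rightarrow> bool" where
  "ancestral g = (acyclic (dir_edges g) \<and>
     (\<forall>a b. g a b = Some Arrow \<and> g b a = Some Arrow \<longrightarrow> \<not> anc g a b) \<and>
     (\<forall>a b. g a b = Some Tail \<and> g b a = Some Tail \<longrightarrow>
         (\<forall>c. g c a \<noteq> Some Arrow \<and> g c b \<noteq> Some Arrow)))"

definition maximal :: "'v set \<Rightarrow> 'v mgraph \<Rightarrow> bool" where
  "maximal V g = (\<forall>a\<in>V. \<forall>b\<in>V. a \<noteq> b \<and> \<not> adj g a b \<longrightarrow>
     (\<exists>Z \<subseteq> V - {a, b}. m_sep g {a} {b} Z))"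

definition is_MAG :: "'v set \<Rightarrow> 'v mgraph \<Rightarrow> bool" where
  "is_MAG V g = (well_formed V g \<and> ancestral g \<and> maximal V g)"

text \<open>Vertices: X_i = i for 1 \<le> i \<le> d, and Y = Suc d.
  Skeleton is the path Y - X_d - ... - X_1.\<close>
definition path_skeleton :: "nat \<Rightarrow> nat mgraph \<Rightarrow> bool" where
  "path_skeleton d g = (\<forall>a b. adj g a b \<longleftrightarrow>
     (a \<in> {1..Suc d} \<and> b \<in> {1..Suc d} \<and> (a = Suc b \<or> b = Suc a)))"

definition sim_G :: "nat mgraph \<Rightarrow> nat \<Rightarrow> nat set \<Rightarrow> nat set \<Rightarrow> bool" where
  "sim_G g d S1 S2 = (\<exists>Sc \<subseteq> S1 \<inter> S2. m_sep g {Suc d} ((S1 \<union> S2) - Sc) Sc)"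

definition N_G :: "nat mgraph \<Rightarrow> nat \<Rightarrow> nat" where
  "N_G g d = card (Pow {1..d} // {(S1, S2). S1 \<subseteq> {1..d} \<and> S2 \<subseteq> {1..d} \<and> sim_G g d S1 S2})"

end

theory Submission
  imports Defs
begin

definition kk :: "(nat \<Rightarrow> bool) \<Rightarrow> nat \<Rightarrow> nat set \<Rightarrow> nat" where
 "kk c d S = (if \<exists>i\<in>{1..d}. (i\<in>S) \<noteq> c i then Max {i\<in>{1..d}. (i\<in>S) \<noteq> c i} else 0)"

definition kprop :: "(nat \<Rightarrow> bool) \<Rightarrow> nat \<Rightarrow> nat set \<Rightarrow> nat \<Rightarrow> bool" where
 "kprop c d S j = ((j = 0 \<or> (j\<in>{1..d} \<and> (j\<in>S) \<noteq> c j)) \<and> (\<forall>i. j<i \<and> i\<le>d \<longrightarrow> (i\<in>S) = c i))"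

lemma kk_spec: "kprop c d S (kk c d S)"
proof (cases "\<exists>i\<in>{1..d}. (i\<in>S) \<noteq> c i")
  case True
  let ?M = "{i\<in>{1..d}. (i\<in>S) \<noteq> c i}"
  have f: "finite ?M" by simp
  have ne: "?M \<noteq> {}" using True by auto
  have k: "kk c d S = Max ?M" using True by (simp add: kk_def)
  have m: "Max ?M \<in> ?M" using Max_in[OF f ne] .
  have le: "\<And>i. i \<in> ?M \<Longrightarrow> i \<le> Max ?M" using Max_ge[OF f] by blast
  show ?thesis unfolding kprop_def k
  proof (intro conjI allI impI)
    show "Max ?M = 0 \<or> Max ?M \<in> {1..d} \<and> (Max ?M \<in> S) \<noteq> c (Max ?M)" using m by blast
  next
    fix i assume "Max ?M < i \<and> i \<le> d"
    then have "i \<in> {1..d}" "\<not> i \<le> Max ?M" by auto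
    then show "(i \<in> S) = c i" using le[of i] by blast
  qed
next
  case False
  then show ?thesis by (auto simp: kk_def kprop_def)
qed

lemma kprop_unique: "kprop c d S j \<Longrightarrow> kprop c d S j' \<Longrightarrow> j = j'"
  unfolding kprop_def by (metis atLeastAtMost_iff linorder_neqE_nat not_less0 )

lemma kk_eqI: "kprop c d S j \<Longrightarrow> kk c d S = j"
  using kk_spec kprop_unique by blast

lemma sim_iff:
  assumes "S1 \<subseteq> {1..d}" "S2 \<subseteq> {1..d}"
  shows "(\<exists>Sc \<subseteq> S1\<inter>S2. \<forall>a\<in>(S1\<union>S2)-Sc. \<exists>i. a<i \<and> i\<le>d \<and> (i\<in>Sc) \<noteq> c i)
     \<longleftrightarrow> kk c d S1 = kk c d S2"
proof
  assume "\<exists>Sc \<subseteq> S1\<inter>S2. \<forall>a\<in>(S1\<union>S2)-Sc. \<exists>i. a<i \<and> i\<le>d \<and> (i\<in>Sc) \<noteq> c i"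
  then obtain Sc where sc: "Sc \<subseteq> S1\<inter>S2" and H: "\<forall>a\<in>(S1\<union>S2)-Sc. \<exists>i. a<i \<and> i\<le>d \<and> (i\<in>Sc) \<noteq> c i" by blast
  define j where "j = kk c d Sc"
  have kj: "kprop c d Sc j" using kk_spec j_def by simp
  have ag: "\<And>S i. S \<subseteq> S1 \<union> S2 \<Longrightarrow> Sc \<subseteq> S \<Longrightarrow> j \<le> i \<Longrightarrow> (i \<in> S) = (i \<in> Sc)"
  proof -
    fix S i assume "S \<subseteq> S1 \<union> S2" "Sc \<subseteq> S" "j \<le> i"
    show "(i \<in> S) = (i \<in> Sc)"
    proof (rule ccontr)
      assume "(i \<in> S) \<noteq> (i \<in> Sc)"
      then have "i \<in> (S1\<union>S2)-Sc" using \<open>S \<subseteq> S1 \<union> S2\<close> \<open>Sc \<subseteq> S\<close> by blast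
      then obtain i' where "i<i'" "i'\<le>d" "(i'\<in>Sc) \<noteq> c i'" using H by blast
      then show False using kj \<open>j \<le> i\<close> unfolding kprop_def by auto
    qed
  qed
  have "kprop c d S1 j" using kj ag[of S1] sc unfolding kprop_def
    by (metis Un_upper1 le_inf_iff less_imp_le order_refl)
  moreover have "kprop c d S2 j" using kj ag[of S2] sc unfolding kprop_def
    by (metis Un_upper2 le_inf_iff less_imp_le order_refl)
  ultimately show "kk c d S1 = kk c d S2" using kk_eqI by metis
next
  assume eq: "kk c d S1 = kk c d S2"
  define k where "k = kk c d S1"
  have k1: "kprop c d S1 k" using kk_spec k_def by simp
  have k2: "kprop c d S2 k" using kk_spec k_def eq by simp
  show "\<exists>Sc \<subseteq> S1\<inter>S2. \<forall>a\<in>(S1\<union>S2)-Sc. \<exists>i. a<i \<and> i\<le>d \<and> (i\<in>Sc) \<noteq> c i"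
  proof (intro exI[of _ "S1 \<inter> S2"] conjI ballI)
    fix a assume a: "a \<in> (S1\<union>S2)-(S1\<inter>S2)"
    then have ad: "a \<in> {1..d}" using assms by blast
    have "k \<noteq> 0 \<and> a < k"
    proof (rule ccontr)
      assume "\<not> (k \<noteq> 0 \<and> a < k)"
      then have "k = 0 \<or> k \<le> a" by auto
      then show False
      proof
        assume "k = 0" then show False using k1 k2 a ad unfolding kprop_def by auto
      next
        assume "k \<le> a"
        then have "k < a \<or> k = a" by auto
        then show False using k1 k2 a ad unfolding kprop_def by auto
      qed
    qed
    then show "\<exists>i. a<i \<and> i\<le>d \<and> (i\<in>S1\<inter>S2) \<noteq> c i" using k1 k2 unfolding kprop_def
      by (intro exI[of _ k]) auto
  qed simp
qed

lemma kk_range: "kk c d S \<le> d"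
  using kk_spec[of c d S] unfolding kprop_def by auto

lemma kk_image: "kk c d ` Pow {1..d} = {0..d}"
proof
  show "kk c d ` Pow {1..d} \<subseteq> {0..d}" using kk_range by auto
next
  show "{0..d} \<subseteq> kk c d ` Pow {1..d}"
  proof
    fix v assume v: "v \<in> {0..d}"
    let ?S = "{i\<in>{1..d}. c i \<noteq> (i = v)}"
    have "kprop c d ?S v" using v unfolding kprop_def by auto
    then have "kk c d ?S = v" by (rule kk_eqI)
    then show "v \<in> kk c d ` Pow {1..d}" by (metis (no_types, lifting) Pow_iff image_eqI mem_Collect_eq subsetI)
  qed
qed

lemma card_quot_fun:
  "card (A // {(x,y). x\<in>A \<and> y\<in>A \<and> f x = f y}) = card (f ` A)"
proof -
  let ?R = "{(x,y). x\<in>A \<and> y\<in>A \<and> f x = f y}"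
  have "A // ?R = (\<lambda>v. {y\<in>A. f y = v}) ` (f ` A)"
  proof -
    have "\<And>x. x \<in> A \<Longrightarrow> ?R `` {x} = {y\<in>A. f y = f x}" by auto
    then show ?thesis unfolding quotient_def by (auto intro!: image_eqI)
  qed
  moreover have "inj_on (\<lambda>v. {y\<in>A. f y = v}) (f ` A)"
    by (rule inj_onI) auto
  ultimately show ?thesis by (simp add: card_image)
qed


definition col :: "nat mgraph \<Rightarrow> nat \<Rightarrow> bool" where
  "col g i = (g (Suc i) i = Some Arrow \<and> g (i-1) i = Some Arrow)"

locale pg =
  fixes d :: nat and g :: "nat mgraph"
  assumes sk: "path_skeleton d g"
begin

lemma adj_iff: "adj g a b \<longleftrightarrow> (a \<in> {1..Suc d} \<and> b \<in> {1..Suc d} \<and> (a = Suc b \<or> b = Suc a))"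
  using sk unfolding path_skeleton_def by blast

lemma anc_col: assumes "col g i" "anc g i z" shows "z = i"
proof -
  have "(i,z) \<in> (dir_edges g)\<^sup>*" using assms(2) unfolding anc_def .
  then show ?thesis
  proof (rule converse_rtranclE)
    assume "i = z" then show ?thesis by simp
  next
    fix y assume "(i,y) \<in> dir_edges g"
    then have e: "g i y = Some Arrow" "g y i = Some Tail" by (auto simp: dir_edges_def)
    then have "adj g i y" by (simp add: adj_def)
    then have "y = Suc i \<or> i = Suc y" using adj_iff by auto
    then show ?thesis using e assms(1) by (auto simp: col_def)
  qed
qed

lemma path_nth: assumes "is_path g xs" "hd xs = Suc d"
  shows "j < length xs \<Longrightarrow> xs ! j = Suc d - j"
proof (induction j rule: less_induct)
  case (less j)
  show ?case
  proof (cases j)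
    case 0 then show ?thesis using assms less by (simp add: hd_conv_nth is_path_def)
  next
    case (Suc m)
    have m: "xs ! m = Suc d - m" using less Suc by simp
    have a: "adj g (xs!m) (xs!Suc m)" using assms(1) less.prems Suc unfolding is_path_def by simp
    have r: "xs!m \<in> {1..Suc d}" "xs!Suc m \<in> {1..Suc d}" "xs!m = Suc (xs!Suc m) \<or> xs!Suc m = Suc (xs!m)"
      using a adj_iff by auto
    show ?thesis
    proof (cases "xs!Suc m = Suc (xs!m)")
      case True
      show ?thesis
      proof (cases m)
        case 0 then show ?thesis using True m r by simp
      next
        case (Suc p)
        have p: "xs!p = Suc d - p" using less \<open>j = Suc m\<close> Suc by simp
        have "m \<le> d" using m r by auto
        then have "xs!p = xs!Suc m" using p m True Suc by simp
        moreover have "p < length xs" "Suc m < length xs" using less.prems \<open>j = Suc m\<close> Suc by auto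
        ultimately have "p = Suc m" using assms(1) nth_eq_iff_index_eq unfolding is_path_def by blast
        then show ?thesis using Suc by simp
      qed
    next
      case False
      then show ?thesis using r m Suc by auto
    qed
  qed
qed

lemma conn_char:
  assumes nth: "\<forall>j<length xs. xs!j = Suc d - j" and len: "length xs = Suc (Suc d) - a"
    and a: "a \<in> {1..d}" and p: "is_path g xs"
  shows "m_connecting g C xs \<longleftrightarrow> (\<forall>i. a < i \<and> i \<le> d \<longrightarrow> (i \<in> C \<longleftrightarrow> col g i))"
proof -
  have coll: "collider g xs j \<longleftrightarrow> col g (Suc d - j)" if j: "0<j" "Suc j < length xs" for j
  proof -
    have jd: "j \<le> d" using j len a by auto
    have e1: "xs!(j-1) = Suc (Suc d - j)" using nth j jd by auto
    have e2: "xs!Suc j = (Suc d - j) - 1" using nth j by auto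
    have e3: "xs!j = Suc d - j" using nth j by auto
    show ?thesis unfolding collider_def col_def using e1 e2 e3 j by simp
  qed
  have ancC: "(\<exists>z\<in>C. anc g i z) \<longleftrightarrow> i\<in>C" if "col g i" for i
    using anc_col[OF that] by (auto simp: anc_def)
  show ?thesis
  proof
    assume mc: "m_connecting g C xs"
    show "\<forall>i. a < i \<and> i \<le> d \<longrightarrow> (i \<in> C \<longleftrightarrow> col g i)"
    proof (intro allI impI)
      fix i assume i: "a < i \<and> i \<le> d"
      define j where "j = Suc d - i"
      have j: "0 < j" "Suc j < length xs" using i len j_def by auto
      have xi: "xs!j = i" "Suc d - j = i" using nth j j_def i by auto
      have "(collider g xs j \<longrightarrow> (\<exists>z\<in>C. anc g (xs ! j) z)) \<and> (\<not> collider g xs j \<longrightarrow> xs ! j \<notin> C)"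
        using mc j unfolding m_connecting_def by blast
      then show "i \<in> C \<longleftrightarrow> col g i" using coll[OF j] xi ancC by auto
    qed
  next
    assume H: "\<forall>i. a < i \<and> i \<le> d \<longrightarrow> (i \<in> C \<longleftrightarrow> col g i)"
    show "m_connecting g C xs" unfolding m_connecting_def
    proof (rule conjI[OF p], intro allI impI)
      fix j assume j: "0 < j \<and> Suc j < length xs"
      define i where "i = Suc d - j"
      have i: "a < i" "i \<le> d" using j len i_def by auto
      have xi: "xs!j = i" using nth j i_def by auto
      have cc: "collider g xs j \<longleftrightarrow> col g i" using coll j i_def by auto
      have "collider g xs j \<longrightarrow> (\<exists>z\<in>C. anc g (xs ! j) z)" using cc xi ancC H i by auto
      moreover have "\<not> collider g xs j \<longrightarrow> xs ! j \<notin> C" using cc xi H i by auto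
      ultimately show "(collider g xs j \<longrightarrow> (\<exists>z\<in>C. anc g (xs ! j) z)) \<and> (\<not> collider g xs j \<longrightarrow> xs ! j \<notin> C)" by blast
    qed
  qed
qed

definition pth :: "nat \<Rightarrow> nat list" where
  "pth a = map (\<lambda>j. Suc d - j) [0..<Suc (Suc d) - a]"

lemma pth_props: assumes a: "a \<in> {1..d}"
  shows "is_path g (pth a)" "hd (pth a) = Suc d" "last (pth a) = a"
    "\<forall>j<length (pth a). pth a ! j = Suc d - j" "length (pth a) = Suc (Suc d) - a"
proof -
  show n: "\<forall>j<length (pth a). pth a ! j = Suc d - j" by (simp add: pth_def)
  show l: "length (pth a) = Suc (Suc d) - a" by (simp add: pth_def)
  have ne: "pth a \<noteq> []" using a by (simp add: pth_def)
  show "hd (pth a) = Suc d" using ne n by (simp add: hd_conv_nth)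
  have "Suc d - a < length (pth a)" using l a by auto
  then have "pth a ! (Suc d - a) = Suc d - (Suc d - a)" using n by blast
  then show "last (pth a) = a" using ne l a by (simp add: last_conv_nth)
  have "inj_on (\<lambda>j. Suc d - j) (set [0..<Suc (Suc d) - a])"
    using a by (auto intro!: inj_onI)
  then have dist: "distinct (pth a)" by (simp add: pth_def distinct_map)
  show "is_path g (pth a)" unfolding is_path_def
  proof (intro conjI ne dist allI impI)
    fix i assume "Suc i < length (pth a)"
    then show "adj g (pth a ! i) (pth a ! Suc i)" using n l a adj_iff by auto
  qed
qed

lemma sep_iff: assumes "A \<subseteq> {1..d}"
  shows "m_sep g {Suc d} A C \<longleftrightarrow> (\<forall>a\<in>A. \<exists>i. a<i \<and> i\<le>d \<and> (i\<in>C) \<noteq> col g i)"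
proof
  assume ms: "m_sep g {Suc d} A C"
  show "\<forall>a\<in>A. \<exists>i. a<i \<and> i\<le>d \<and> (i\<in>C) \<noteq> col g i"
  proof (rule ccontr)
    assume "\<not> ?thesis"
    then obtain a where aA: "a \<in> A" and H: "\<forall>i. a < i \<and> i \<le> d \<longrightarrow> (i \<in> C \<longleftrightarrow> col g i)" by blast
    have a: "a \<in> {1..d}" using aA assms by blast
    have "m_connecting g C (pth a)" using conn_char[OF pth_props(4,5)[OF a] a pth_props(1)[OF a]] H by blast
    then show False using ms pth_props(2,3)[OF a] aA unfolding m_sep_def by auto
  qed
next
  assume H: "\<forall>a\<in>A. \<exists>i. a<i \<and> i\<le>d \<and> (i\<in>C) \<noteq> col g i"
  show "m_sep g {Suc d} A C" unfolding m_sep_def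
  proof
    assume "\<exists>xs. m_connecting g C xs \<and> hd xs \<in> {Suc d} \<and> last xs \<in> A"
    then obtain xs where mc: "m_connecting g C xs" and h: "hd xs = Suc d" and la: "last xs \<in> A" by auto
    have p: "is_path g xs" using mc m_connecting_def by blast
    have n: "\<forall>j<length xs. xs!j = Suc d - j" using path_nth[OF p h] by blast
    define a where "a = last xs"
    have a: "a \<in> {1..d}" using la assms a_def by blast
    have ne: "xs \<noteq> []" using p is_path_def by blast
    have "a = Suc d - (length xs - 1)" using n ne a_def by (simp add: last_conv_nth)
    then have len: "length xs = Suc (Suc d) - a" using a ne by auto
    have "\<forall>i. a < i \<and> i \<le> d \<longrightarrow> (i \<in> C \<longleftrightarrow> col g i)" using conn_char[OF n len a p] mc by blast
    then show False using H la a_def by blast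
  qed
qed

end

lemma (in pg) sim_equiv:
  assumes s: "S1 \<subseteq> {1..d}" "S2 \<subseteq> {1..d}"
  shows "sim_G g d S1 S2 \<longleftrightarrow> kk (col g) d S1 = kk (col g) d S2"
proof -
  have "sim_G g d S1 S2 \<longleftrightarrow> (\<exists>Sc \<subseteq> S1\<inter>S2. \<forall>a\<in>(S1\<union>S2)-Sc. \<exists>i. a<i \<and> i\<le>d \<and> (i\<in>Sc) \<noteq> col g i)"
    unfolding sim_G_def
  proof (intro ex_cong1 conj_cong refl)
    fix Sc assume "Sc \<subseteq> S1 \<inter> S2"
    have "(S1 \<union> S2) - Sc \<subseteq> {1..d}" using s by blast
    then show "m_sep g {Suc d} (S1 \<union> S2 - Sc) Sc = (\<forall>a\<in>S1 \<union> S2 - Sc. \<exists>i>a. i \<le> d \<and> (i \<in> Sc) \<noteq> col g i)"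
      by (rule sep_iff)
  qed
  also have "\<dots> \<longleftrightarrow> kk (col g) d S1 = kk (col g) d S2" by (rule sim_iff[OF s])
  finally show ?thesis .
qed

theorem mainTheorem9:
  fixes d :: nat and g :: "nat mgraph"
  assumes "d \<ge> 1"
    and "is_DAG {1..Suc d} g \<or> is_MAG {1..Suc d} g"
    and "path_skeleton d g"
  shows "N_G g d = d + 1"
proof -
  interpret pg d g using assms(3) by unfold_locales
  let ?f = "kk (col g) d"
  have R: "{(S1, S2). S1 \<subseteq> {1..d} \<and> S2 \<subseteq> {1..d} \<and> sim_G g d S1 S2}
    = {(x,y). x \<in> Pow {1..d} \<and> y \<in> Pow {1..d} \<and> ?f x = ?f y}"
    using sim_equiv by blast
  have "N_G g d = card (Pow {1..d} // {(x,y). x \<in> Pow {1..d} \<and> y \<in> Pow {1..d} \<and> ?f x = ?f y})"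
    unfolding N_G_def R ..
  also have "\<dots> = card (?f ` Pow {1..d})" by (rule card_quot_fun)
  also have "\<dots> = d + 1" unfolding kk_image by simp
  finally show ?thesis .
qed
end
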